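(* Let $\mathfrak l$ be a real finite-dimensional nilpotent Lie algebra with $\dim\mathfrak l'=2$ and $\mathfrak l'\subset\mathfrak z(\mathfrak l)$. Then there exists a 3-dimensional subspace $\bar{\mathfrak l}\subset\mathfrak l$ with $[\bar{\mathfrak l},\bar{\mathfrak l}]=\mathfrak l'$. Moreover, one can choose a basis $X_1,X_2,X_3$ of $\bar{\mathfrak l}$ and a basis $Y,Z$ of $\mathfrak l'$ such that $[X_1,X_2]=Y$, $[X_1,X_3]=Z$, $[X_2,X_3]=0$.
   Context: $\mathfrak l'=[\mathfrak l,\mathfrak l]$, $\mathfrak z(\mathfrak l)$ the centre. *)

theory Defs
  imports "HOL-Analysis.Analysis"
begin

definition lie_algebra :: "('a::real_vector \<Rightarrow> 'a \<Rightarrow> 'a) \<Rightarrow> bool" where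
  "lie_algebra br \<longleftrightarrow>
     (\<forall>y. linear (\<lambda>x. br x y)) \<and> (\<forall>x. linear (\<lambda>y. br x y)) \<and>
     (\<forall>x. br x x = 0) \<and>
     (\<forall>x y z. br x (br y z) + br y (br z x) + br z (br x y) = 0)"

definition finite_dim_space :: "'a::real_vector itself \<Rightarrow> bool" where
  "finite_dim_space _ \<longleftrightarrow> (\<exists>B::'a set. finite B \<and> span B = UNIV)"

definition bracket_set :: "('a::real_vector \<Rightarrow> 'a \<Rightarrow> 'a) \<Rightarrow> 'a set \<Rightarrow> 'a set \<Rightarrow> 'a set" where
  "bracket_set br A B = span {br x y | x y. x \<in> A \<and> y \<in> B}"

definition derived_alg :: "('a::real_vector \<Rightarrow> 'a \<Rightarrow> 'a) \<Rightarrow> 'a set" where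
  "derived_alg br = bracket_set br UNIV UNIV"

definition lie_center :: "('a::real_vector \<Rightarrow> 'a \<Rightarrow> 'a) \<Rightarrow> 'a set" where
  "lie_center br = {z. \<forall>x. br z x = 0}"

fun lower_central :: "('a::real_vector \<Rightarrow> 'a \<Rightarrow> 'a) \<Rightarrow> nat \<Rightarrow> 'a set" where
  "lower_central br 0 = UNIV"
| "lower_central br (Suc k) = bracket_set br (lower_central br k) UNIV"

definition nilpotent_lie :: "('a::real_vector \<Rightarrow> 'a \<Rightarrow> 'a) \<Rightarrow> bool" where
  "nilpotent_lie br \<longleftrightarrow> (\<exists>k. lower_central br k = {0})"

end

theory Submission imports Defs begin
lemma indep2_iff:
  fixes Y Z :: "'a::real_vector"
  shows "(independent {Y,Z} \<and> Y \<noteq> Z) \<longleftrightarrow> (\<forall>s t. s *\<^sub>R Y + t *\<^sub>R Z = 0 \<longrightarrow> s = 0 \<and> t = 0)"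
proof
  assume h: "independent {Y,Z} \<and> Y \<noteq> Z"
  hence Z0: "Z \<noteq> 0" and Yn: "Y \<notin> span {Z}"
    using real_vector.independent_insert[of Y "{Z}"] h real_vector.dependent_zero by auto
  show "\<forall>s t. s *\<^sub>R Y + t *\<^sub>R Z = 0 \<longrightarrow> s = 0 \<and> t = 0"
  proof (intro allI impI)
    fix s t assume e: "s *\<^sub>R Y + t *\<^sub>R Z = 0"
    have "s = 0"
    proof (rule ccontr)
      assume "s \<noteq> 0"
      have "s *\<^sub>R Y = - (t *\<^sub>R Z)" using e by (simp add: eq_neg_iff_add_eq_0)
      hence "inverse s *\<^sub>R (s *\<^sub>R Y) = (- t / s) *\<^sub>R Z" by (simp add: divide_inverse mult.commute)
      hence "Y = (- t / s) *\<^sub>R Z" using \<open>s \<noteq> 0\<close> by simp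
      thus False using Yn by (metis real_vector.span_base real_vector.span_scale singletonI)
    qed
    with e Z0 show "s = 0 \<and> t = 0" by simp
  qed
next
  assume h: "\<forall>s t. s *\<^sub>R Y + t *\<^sub>R Z = 0 \<longrightarrow> s = 0 \<and> t = 0"
  have Z0: "Z \<noteq> 0" using h[rule_format, of 0 1] by auto
  have YZ: "Y \<noteq> Z" using h[rule_format, of 1 "-1"] by auto
  have "Y \<notin> span {Z}"
  proof
    assume "Y \<in> span {Z}"
    then obtain k where "Y = k *\<^sub>R Z" by (auto simp: real_vector.span_singleton)
    thus False using h[rule_format, of 1 "-k"] by auto
  qed
  moreover have "independent {Z}" using Z0 by (simp add: real_vector.independent_insert)
  ultimately show "independent {Y,Z} \<and> Y \<noteq> Z" using YZ
    by (simp add: real_vector.independent_insert)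
qed

definition indep2 :: "'a::real_vector \<Rightarrow> 'a \<Rightarrow> bool" where
  "indep2 p q \<longleftrightarrow> (\<forall>s t. s *\<^sub>R p + t *\<^sub>R q = 0 \<longrightarrow> s = 0 \<and> t = 0)"

lemma span2_iff:
  fixes a b w :: "'a::real_vector"
  shows "w \<in> span {a, b} \<longleftrightarrow> (\<exists>s t. w = s *\<^sub>R a + t *\<^sub>R b)"
  by (auto simp: real_vector.span_insert real_vector.span_singleton algebra_simps)

lemma line_lemma:
  fixes p q :: "'a::real_vector"
  assumes "p \<noteq> 0" "\<not> indep2 p q"
  shows "\<exists>k. q = k *\<^sub>R p"
proof -
  obtain s t where e: "s *\<^sub>R p + t *\<^sub>R q = 0" and nz: "s \<noteq> 0 \<or> t \<noteq> 0"
    using assms(2) unfolding indep2_def by auto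
  have "t \<noteq> 0" using e nz assms(1) by auto
  have "t *\<^sub>R q = - (s *\<^sub>R p)" using e by (simp add: eq_neg_iff_add_eq_0 add.commute)
  hence "inverse t *\<^sub>R (t *\<^sub>R q) = (- s / t) *\<^sub>R p" by (simp add: divide_inverse mult.commute)
  hence "q = (- s / t) *\<^sub>R p" using \<open>t \<noteq> 0\<close> by simp
  thus ?thesis by blast
qed

lemma indep2_nz: "indep2 p q \<Longrightarrow> p \<noteq> 0 \<and> q \<noteq> 0"
proof -
  assume h: "indep2 p q"
  have "p \<noteq> 0"
  proof
    assume "p = 0"
    thus False using h[unfolded indep2_def, rule_format, of 1 0] by simp
  qed
  moreover have "q \<noteq> 0"
  proof
    assume "q = 0"
    thus False using h[unfolded indep2_def, rule_format, of 0 1] by simp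
  qed
  ultimately show ?thesis by blast
qed

lemma indep2_span_eq:
  fixes p q Y Z :: "'a::real_vector"
  assumes "p \<in> span {Y, Z}" "q \<in> span {Y, Z}" "indep2 p q"
  shows "span {p, q} = span {Y, Z}"
proof (rule equalityI)
  show "span {p, q} \<subseteq> span {Y, Z}"
    using assms by (simp add: real_vector.span_minimal real_vector.subspace_span)
  show "span {Y, Z} \<subseteq> span {p, q}"
  proof (rule ccontr)
    assume nsub: "\<not> span {Y, Z} \<subseteq> span {p, q}"
    then obtain w where w: "w \<in> {Y, Z}" "w \<notin> span {p, q}"
    proof -
      have "\<not> {Y, Z} \<subseteq> span {p, q}"
        using nsub real_vector.span_minimal[of "{Y,Z}" "span {p,q}"] real_vector.subspace_span[of "{p,q}"] by blast
      thus ?thesis using that by blast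
    qed
    have ipq: "independent {p, q}" "p \<noteq> q" using assms(3) indep2_iff unfolding indep2_def by blast+
    have "w \<notin> {p, q}" using w(2) real_vector.span_base[of _ "{p,q}"] by blast
    hence i3: "independent {w, p, q}" using ipq w(2) real_vector.independent_insertI by blast
    have "{w, p, q} \<subseteq> span {Y, Z}" using assms w(1) real_vector.span_base[of _ "{Y,Z}"] by auto
    hence "card {w, p, q} \<le> card {Y, Z}"
      using real_vector.independent_span_bound[OF _ i3, of "{Y,Z}"] by simp
    moreover have "card {w, p, q} = 3" using \<open>w \<notin> {p, q}\<close> ipq(2) by auto
    moreover have "card {Y, Z} \<le> 2" by (simp add: card_insert_le_m1)
    ultimately show False by linarith
  qed
qed


lemma lie_facts:
  assumes "lie_algebra br"
  shows "br (x + y) z = br x z + br y z" "br x (y + z) = br x y + br x z"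
    "br (x - y) z = br x z - br y z" "br x (y - z) = br x y - br x z"
    "br (c *\<^sub>R x) y = c *\<^sub>R br x y" "br x (c *\<^sub>R y) = c *\<^sub>R br x y"
    "br x x = 0" "br 0 y = 0" "br x 0 = 0" "br y x = - br x y"
proof -
  have l1: "linear (\<lambda>x. br x y)" for y using assms unfolding lie_algebra_def by simp
  have l2: "linear (\<lambda>y. br x y)" for x using assms unfolding lie_algebra_def by simp
  show a1: "br (x + y) z = br x z + br y z" for x y z using linear_add[OF l1[of z], of x y] by simp
  show a2: "br x (y + z) = br x y + br x z" for x y z using linear_add[OF l2[of x], of y z] by simp
  show "br (x - y) z = br x z - br y z" using linear_diff[OF l1[of z], of x y] by simp
  show "br x (y - z) = br x y - br x z" using linear_diff[OF l2[of x], of y z] by simp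
  show "br (c *\<^sub>R x) y = c *\<^sub>R br x y" using linear_scale[OF l1[of y], of c x] by simp
  show "br x (c *\<^sub>R y) = c *\<^sub>R br x y" using linear_scale[OF l2[of x], of c y] by simp
  show a0: "br x x = 0" for x using assms unfolding lie_algebra_def by simp
  show "br 0 y = 0" using linear_0[OF l1[of y]] by simp
  show "br x 0 = 0" using linear_0[OF l2[of x]] by simp
  have "br (x + y) (x + y) = br x x + br y x + (br x y + br y y)" by (simp only: a1 a2)
  hence "0 = br x y + br y x" using a0 by (simp add: add.commute)
  thus "br y x = - br x y" by (simp add: eq_neg_iff_add_eq_0 add.commute)
qed

lemma fixup:
  fixes br :: "'a::real_vector \<Rightarrow> 'a \<Rightarrow> 'a"
  assumes L: "lie_algebra br" and D: "derived_alg br = span {br x u, br x v}"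
    and I: "indep2 (br x u) (br x v)"
  shows "\<exists>L. subspace L \<and> dim L = 3 \<and> bracket_set br L L = derived_alg br \<and>
           (\<exists>X1 X2 X3 Y Z. independent {X1, X2, X3} \<and> card {X1, X2, X3} = 3 \<and>
              span {X1, X2, X3} = L \<and>
              independent {Y, Z} \<and> Y \<noteq> Z \<and> span {Y, Z} = derived_alg br \<and>
              br X1 X2 = Y \<and> br X1 X3 = Z \<and> br X2 X3 = 0)"
proof -
  note F[simp] = lie_facts(1-9)[OF L]
  note asym = lie_facts(10)[OF L]
  define Y where "Y = br x u"
  define Z where "Z = br x v"
  have I': "indep2 Y Z" using I Y_def Z_def by simp
  have Y0: "Y \<noteq> 0" and Z0: "Z \<noteq> 0" using indep2_nz[OF I'] by auto
  have "br u v \<in> derived_alg br"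
    unfolding derived_alg_def bracket_set_def by (rule real_vector.span_base) blast
  hence "br u v \<in> span {Y, Z}" using D Y_def Z_def by simp
  then obtain \<alpha> \<beta> where uv: "br u v = \<alpha> *\<^sub>R Y + \<beta> *\<^sub>R Z"
  proof -
    have "\<exists>s t. br u v = s *\<^sub>R Y + t *\<^sub>R Z" using \<open>br u v \<in> span {Y, Z}\<close> span2_iff[of "br u v" Y Z] by simp
    thus ?thesis using that by blast
  qed
  define X2 where "X2 = u - \<beta> *\<^sub>R x"
  define X3 where "X3 = v + \<alpha> *\<^sub>R x"
  have ux: "br u x = - Y" using Y_def asym[of x u] by simp
  have vx: "br v x = - Z" using Z_def asym[of x v] by simp
  have b12: "br x X2 = Y" unfolding X2_def Y_def by simp
  have b13: "br x X3 = Z" unfolding X3_def Z_def by simp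
  have b23: "br X2 X3 = 0" unfolding X2_def X3_def
    by (simp add: uv ux flip: Y_def Z_def)
  have x0: "x \<noteq> 0" using Y0 Y_def by auto
  have d12: "x \<noteq> X2" using b12 Y0 by auto
  have d13: "x \<noteq> X3" using b13 Z0 by auto
  have d23: "X2 \<noteq> X3"
  proof
    assume "X2 = X3" hence "Y = Z" using b12 b13 by simp
    thus False using I'[unfolded indep2_def, rule_format, of 1 "-1"] by simp
  qed
  have i23: "indep2 X2 X3"
    unfolding indep2_def
  proof (intro allI impI)
    fix s t assume "s *\<^sub>R X2 + t *\<^sub>R X3 = 0"
    hence "br x (s *\<^sub>R X2 + t *\<^sub>R X3) = 0" by simp
    hence "s *\<^sub>R Y + t *\<^sub>R Z = 0" using b12 b13 by simp
    thus "s = 0 \<and> t = 0" using I' unfolding indep2_def by blast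
  qed
  have xn: "x \<notin> span {X2, X3}"
  proof
    assume "x \<in> span {X2, X3}"
    then obtain s t where xe: "x = s *\<^sub>R X2 + t *\<^sub>R X3" using span2_iff[of x X2 X3] by blast
    have "0 = br x (s *\<^sub>R X2 + t *\<^sub>R X3)" using xe F(7)[of x] by simp
    hence "s *\<^sub>R Y + t *\<^sub>R Z = 0" using b12 b13 by simp
    hence "s = 0 \<and> t = 0" using I' unfolding indep2_def by blast
    thus False using xe x0 by simp
  qed
  have ind3: "independent {x, X2, X3}"
    using xn i23 indep2_iff[of X2 X3] unfolding indep2_def
    by (simp add: real_vector.independent_insertI)
  have c3: "card {x, X2, X3} = 3" using d12 d13 d23 by auto
  define L where "L = span {x, X2, X3}"
  have inL: "x \<in> L" "X2 \<in> L" "X3 \<in> L" unfolding L_def by (auto intro: real_vector.span_base)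
  have DYZ: "derived_alg br = span {Y, Z}" using D Y_def Z_def by simp
  have br: "bracket_set br L L = derived_alg br"
  proof
    show "bracket_set br L L \<subseteq> derived_alg br"
      unfolding derived_alg_def bracket_set_def by (rule real_vector.span_mono) blast
    have "{Y, Z} \<subseteq> {br a b |a b. a \<in> L \<and> b \<in> L}" using inL b12 b13 by blast
    thus "derived_alg br \<subseteq> bracket_set br L L"
      unfolding DYZ bracket_set_def by (rule real_vector.span_mono)
  qed
  have iYZ: "independent {Y, Z} \<and> Y \<noteq> Z" using I' indep2_iff unfolding indep2_def by blast
  show ?thesis
    apply (rule exI[of _ L])
    apply (intro conjI)
       apply (simp add: L_def real_vector.subspace_span)
      apply (simp add: L_def real_vector.dim_eq_card_independent[OF ind3] c3)
     apply (rule br)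
    apply (rule exI[of _ x], rule exI[of _ X2], rule exI[of _ X3], rule exI[of _ Y], rule exI[of _ Z])
    using ind3 c3 L_def iYZ DYZ b12 b13 b23 by simp
qed


theorem lemma1:
  fixes br :: "'a::real_vector \<Rightarrow> 'a \<Rightarrow> 'a"
  assumes "lie_algebra br"
    and "finite_dim_space TYPE('a)"
    and "nilpotent_lie br"
    and "dim (derived_alg br) = 2"
    and "derived_alg br \<subseteq> lie_center br"
  shows "\<exists>L. subspace L \<and> dim L = 3 \<and> bracket_set br L L = derived_alg br \<and>
           (\<exists>X1 X2 X3 Y Z. independent {X1, X2, X3} \<and> card {X1, X2, X3} = 3 \<and>
              span {X1, X2, X3} = L \<and>
              independent {Y, Z} \<and> Y \<noteq> Z \<and> span {Y, Z} = derived_alg br \<and>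
              br X1 X2 = Y \<and> br X1 X3 = Z \<and> br X2 X3 = 0)"
proof -
  note F[simp] = lie_facts(1-9)[OF assms(1)]
  note asym = lie_facts(10)[OF assms(1)]
  define S where "S = {br x y | x y. x \<in> (UNIV::'a set) \<and> y \<in> UNIV}"
  have DS: "derived_alg br = span S" unfolding derived_alg_def bracket_set_def S_def ..
  obtain B where B: "B \<subseteq> S" "independent B" "S \<subseteq> span B" "card B = dim S"
    using real_vector.basis_exists[of S] by blast
  have "dim S = 2" using assms(4) DS by simp
  hence "\<exists>Y Z. B = {Y, Z} \<and> Y \<noteq> Z" using B(4) by (simp add: card_2_iff)
  then obtain Y Z where BYZ: "B = {Y, Z}" "Y \<noteq> Z" by blast
  have "span S = span B"
  proof
    show "span S \<subseteq> span B" using B(3) real_vector.span_minimal real_vector.subspace_span by blast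
    show "span B \<subseteq> span S" using B(1) by (rule real_vector.span_mono)
  qed
  hence D: "derived_alg br = span {Y, Z}" using DS BYZ by simp
  have IYZ: "indep2 Y Z" using indep2_iff[of Y Z] B(2) BYZ unfolding indep2_def by simp
  obtain a b where Yab: "Y = br a b" using B(1) BYZ S_def by blast
  obtain c d where Zcd: "Z = br c d" using B(1) BYZ S_def by blast
  have inD: "br x y \<in> span {Y, Z}" for x y
    unfolding D[symmetric] derived_alg_def bracket_set_def by (rule real_vector.span_base) blast
  show ?thesis
  proof (cases "\<exists>x u v. indep2 (br x u) (br x v)")
    case True
    then obtain x u v where I: "indep2 (br x u) (br x v)" by blast
    have "derived_alg br = span {br x u, br x v}"
      using D indep2_span_eq[OF inD inD I] by simp
    thus ?thesis using fixup[OF assms(1) _ I] by blast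
  next
    case False
    hence nI: "\<not> indep2 (br x u) (br x v)" for x u v by blast
    have Y0: "Y \<noteq> 0" and Z0: "Z \<noteq> 0" using indep2_nz[OF IYZ] by auto
    obtain k1 where k1: "br a d = k1 *\<^sub>R Y" using line_lemma[of Y "br a d"] Y0 nI[of a b d] Yab by auto
    have dc: "br d c = - Z" using Zcd asym[of c d] by simp
    have dc0: "br d c \<noteq> 0" using dc Z0 by simp
    obtain k2 where k2: "br d a = k2 *\<^sub>R br d c" using line_lemma[OF dc0 nI[of d c a]] by auto
    have "br a d = k2 *\<^sub>R Z" using asym[of a d] k2 dc by simp
    hence "k1 *\<^sub>R Y + (- k2) *\<^sub>R Z = 0" using k1 by simp
    hence "k1 = 0" using IYZ unfolding indep2_def by blast
    hence ad: "br a d = 0" using k1 by simp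
    obtain k3 where k3: "br c b = k3 *\<^sub>R Z" using line_lemma[of Z "br c b"] Z0 nI[of c d b] Zcd by auto
    have ba: "br b a = - Y" using Yab asym[of a b] by simp
    have ba0: "br b a \<noteq> 0" using ba Y0 by simp
    obtain k4 where k4: "br b c = k4 *\<^sub>R br b a" using line_lemma[OF ba0 nI[of b a c]] by auto
    have "br c b = k4 *\<^sub>R Y" using asym[of b c] k4 ba by simp
    hence "(- k4) *\<^sub>R Y + k3 *\<^sub>R Z = 0" using k3 by simp
    hence "k3 = 0" using IYZ unfolding indep2_def by blast
    hence cb: "br c b = 0" using k3 by simp
    have "br (a + c) b = Y" using Yab cb by simp
    moreover have "br (a + c) d = Z" using Zcd ad by simp
    ultimately have "indep2 (br (a + c) b) (br (a + c) d)" using IYZ by simp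
    thus ?thesis using nI by blast
  qed
qed

end
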